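(* Let $(X,\mathcal{A})$ be a measurable space, $f,g\in\mathcal{F}^{(X,\mathcal{A})}$ comonotone, $\otimes:[0,\infty]^2\to[0,\infty]$ a pseudo-multiplication with neutral element $e\in(0,\infty]$, and $m\in\mathcal{M}^{(X,\mathcal{A})}$ a monotone measure with $a\otimes m(X)\le a$ for all $a\in[0,\infty]$. Let $U_0,U_1,U_2:[0,\infty)\to[0,\infty)$ be continuous strictly increasing with $\mathbf{I}_\otimes(m,U_1(f))<\infty$ and $\mathbf{I}_\otimes(m,U_2(g))<\infty$. Let $\star:[0,\infty)^2\to[0,\infty)$ be continuous and non-decreasing in both arguments and $\psi:[0,\infty)\to[0,\infty)$ continuous and strictly increasing. If for all $a,b\in[0,\infty)$, $c\in[0,\infty]$, \[ U_0^{-1}\big[U_0(\psi(a)\star\psi(b))\otimes c\big]\ \ge\ \big[\psi\big(U_1^{-1}[U_1(a)\otimes c]\big)\star\psi(b)\big]\vee\big[\psi(a)\star\psi\big(U_2^{-1}[U_2(b)\otimes c]\big)\big], \] then \[ U_0^{-1}\big[\mathbf{I}_\otimes\big(m,U_0[\psi(f)\star\psi(g)]\big)\big]\ \ge\ \psi\big(U_1^{-1}(\mathbf{I}_\otimes(m,U_1(f)))\big)\star\psi\big(U_2^{-1}(\mathbf{I}_\otimes(m,U_2(g)))\big). \]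
   Context: A monotone measure on $(X,\mathcal{A})$ is $m:\mathcal{A}\to[0,\infty]$ with $m(\emptyset)=0$, $m(X)>0$, $m(A)\le m(B)$ for $A\subseteq B$; $\mathcal{M}^{(X,\mathcal{A})}$ is the set of these; $\mathcal{F}^{(X,\mathcal{A})}$ the set of $\mathcal{A}$-measurable $f:X\to[0,\infty]$. A pseudo-multiplication is $\otimes:[0,\infty]^2\to[0,\infty]$, non-decreasing in each component, with annihilator $0$ and a neutral element $e\in(0,\infty]$. $\mathbf{I}_\otimes(m,f)=\sup\{t\otimes m(\{f\ge t\}) : t\in(0,\infty]\}$. $f,g$ are comonotone if $(f(x)-f(y))(g(x)-g(y))\ge0$ for all $x,y$. Operations on functions are pointwise. *)

theory Defs
  imports "HOL-Analysis.Analysis"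
begin

definition monotone_measure :: "'a measure \<Rightarrow> ('a set \<Rightarrow> ennreal) \<Rightarrow> bool" where
  "monotone_measure M m \<longleftrightarrow>
     m {} = 0 \<and> m (space M) > 0 \<and>
     (\<forall>A\<in>sets M. \<forall>B\<in>sets M. A \<subseteq> B \<longrightarrow> m A \<le> m B)"

definition pseudo_mult :: "(ennreal \<Rightarrow> ennreal \<Rightarrow> ennreal) \<Rightarrow> ennreal \<Rightarrow> bool" where
  "pseudo_mult pm e \<longleftrightarrow>
     (\<forall>x y z. x \<le> y \<longrightarrow> pm x z \<le> pm y z) \<and>
     (\<forall>x y z. x \<le> y \<longrightarrow> pm z x \<le> pm z y) \<and>
     (\<forall>x. pm 0 x = 0 \<and> pm x 0 = 0) \<and>
     0 < e \<and> (\<forall>x. pm e x = x \<and> pm x e = x)"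

definition gen_sugeno ::
  "'a measure \<Rightarrow> (ennreal \<Rightarrow> ennreal \<Rightarrow> ennreal) \<Rightarrow> ('a set \<Rightarrow> ennreal) \<Rightarrow> ('a \<Rightarrow> ennreal) \<Rightarrow> ennreal" where
  "gen_sugeno M pm m f = (SUP t\<in>{0<..}. pm t (m {x\<in>space M. t \<le> f x}))"

definition comonotone :: "'a measure \<Rightarrow> ('a \<Rightarrow> real) \<Rightarrow> ('a \<Rightarrow> real) \<Rightarrow> bool" where
  "comonotone M f g \<longleftrightarrow>
     (\<forall>x\<in>space M. \<forall>y\<in>space M. (f x - f y) * (g x - g y) \<ge> 0)"

text \<open>Inverse of a continuous strictly increasing U : [0,infinity) -> [0,infinity),
  extended to arguments in [0,infinity] as the generalized inverse
  sup{x >= 0 . U x <= y}; on the range of U it is the ordinary inverse.\<close>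
definition ginv :: "(real \<Rightarrow> real) \<Rightarrow> ennreal \<Rightarrow> ennreal" where
  "ginv U y = (SUP x\<in>{x. 0 \<le> x \<and> ennreal (U x) \<le> y}. ennreal x)"

definition cont_strict_incr :: "(real \<Rightarrow> real) \<Rightarrow> bool" where
  "cont_strict_incr U \<longleftrightarrow>
     continuous_on {0..} U \<and> strict_mono_on {0..} U \<and> (\<forall>x\<ge>0. U x \<ge> 0)"

end

theory Submission
  imports Defs
begin


lemma csi_le_iff:
  assumes "cont_strict_incr U" "0 \<le> x" "0 \<le> y"
  shows "U x \<le> U y \<longleftrightarrow> x \<le> y"
  using assms unfolding cont_strict_incr_def strict_mono_on_def
  by (metis atLeast_iff linorder_not_le order_less_imp_le order.strict_iff_order)

lemma csi_less_iff:
  assumes "cont_strict_incr U" "0 \<le> x" "0 \<le> y"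
  shows "U x < U y \<longleftrightarrow> x < y"
  using csi_le_iff[OF assms(1) assms(3) assms(2)] by (simp add: not_le[symmetric])

lemma csi_nonneg: "cont_strict_incr U \<Longrightarrow> 0 \<le> x \<Longrightarrow> 0 \<le> U x"
  by (simp add: cont_strict_incr_def)

lemma ginv_mono: "y \<le> z \<Longrightarrow> ginv U y \<le> ginv U z"
  unfolding ginv_def by (rule SUP_subset_mono) auto

lemma ginv_ge: "0 \<le> x \<Longrightarrow> ennreal (U x) \<le> y \<Longrightarrow> ennreal x \<le> ginv U y"
  unfolding ginv_def by (rule SUP_upper) auto

lemma pm_mono2: "pseudo_mult pm e \<Longrightarrow> x \<le> y \<Longrightarrow> pm z x \<le> pm z y"
  by (simp add: pseudo_mult_def)
lemma pm_zero1: "pseudo_mult pm e \<Longrightarrow> pm 0 x = 0"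
  by (simp add: pseudo_mult_def)
lemma pm_zero2: "pseudo_mult pm e \<Longrightarrow> pm x 0 = 0"
  by (simp add: pseudo_mult_def)

lemma mm_mono: "monotone_measure M m \<Longrightarrow> A \<in> sets M \<Longrightarrow> B \<in> sets M \<Longrightarrow> A \<subseteq> B \<Longrightarrow> m A \<le> m B"
  by (simp add: monotone_measure_def)

lemma bound:
  assumes U: "cont_strict_incr U" and pm: "pseudo_mult pm e" and mm: "monotone_measure M m"
    and mX: "\<forall>a. pm a (m (space M)) \<le> a" and E: "E \<in> sets M"
    and a': "0 \<le> a'" and a: "0 \<le> a"
    and h: "a = 0 \<or> ennreal (U a) \<le> pm (ennreal (U a')) (m E)"
  shows "a \<le> enn2real (ginv U (pm (ennreal (U a')) (m E)))" "a \<le> a'"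
proof -
  have le: "pm (ennreal (U a')) (m E) \<le> ennreal (U a')"
    using pm_mono2[OF pm mm_mono[OF mm E sets.top[of M] sets.sets_into_space[OF E]]] mX
    by (meson order_trans)
  have fin: "ginv U (pm (ennreal (U a')) (m E)) \<le> ennreal a'"
    unfolding ginv_def
  proof (rule SUP_least)
    fix x assume "x \<in> {x. 0 \<le> x \<and> ennreal (U x) \<le> pm (ennreal (U a')) (m E)}"
    then have "0 \<le> x" "ennreal (U x) \<le> ennreal (U a')" using le by auto
    then have "U x \<le> U a'" using csi_nonneg[OF U a'] by (simp add: ennreal_le_iff)
    then show "ennreal x \<le> ennreal a'" using csi_le_iff[OF U \<open>0 \<le> x\<close> a'] by (simp add: ennreal_leI)
  qed
  show "a \<le> enn2real (ginv U (pm (ennreal (U a')) (m E)))"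
  proof (cases "a = 0")
    case True then show ?thesis by simp
  next
    case False
    then have "ennreal a \<le> ginv U (pm (ennreal (U a')) (m E))" using h ginv_ge a by blast
    from enn2real_mono[OF this] fin show ?thesis using a
      by (metis enn2real_ennreal ennreal_less_top le_less_trans)
  qed
  show "a \<le> a'"
  proof (cases "a = 0")
    case True then show ?thesis using a' by simp
  next
    case False
    then have "ennreal (U a) \<le> ennreal (U a')" using h le by auto
    then have "U a \<le> U a'" using csi_nonneg[OF U a'] by (simp add: ennreal_le_iff)
    then show ?thesis using csi_le_iff[OF U a a'] by simp
  qed
qed

lemma approx:
  assumes U: "cont_strict_incr U" and fnn: "\<forall>x\<in>space M. f x \<ge> 0"
    and pm: "pseudo_mult pm e" and mm: "monotone_measure M m"
    and mX: "\<forall>a. pm a (m (space M)) \<le> a" and a: "0 \<le> a"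
    and lt: "a < enn2real (ginv U (gen_sugeno M pm m (\<lambda>x. ennreal (U (f x)))))"
  shows "\<exists>a'\<ge>0. ennreal (U a) < pm (ennreal (U a')) (m {x\<in>space M. a' \<le> f x})"
proof -
  define A where "A = gen_sugeno M pm m (\<lambda>x. ennreal (U (f x)))"
  have "ginv U A \<noteq> top" using lt a unfolding A_def by auto
  then have "ennreal a < ginv U A" using lt a unfolding A_def
    by (metis ennreal_enn2real_if ennreal_less_iff enn2real_nonneg)
  then obtain x where x: "0 \<le> x" "ennreal (U x) \<le> A" "a < x"
    using a unfolding ginv_def less_SUP_iff by (auto simp: ennreal_less_iff)
  have "U a < U x" using csi_less_iff[OF U a x(1)] x(3) by simp
  then have "ennreal (U a) < ennreal (U x)" using csi_nonneg[OF U a] by (simp add: ennreal_less_iff)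
  then have "ennreal (U a) < A" using x(2) by (rule less_le_trans)
  then obtain t where t: "0 < t" and lt2: "ennreal (U a) < pm t (m {y\<in>space M. t \<le> ennreal (U (f y))})"
    unfolding A_def gen_sugeno_def less_SUP_iff by auto
  define L where "L = {y\<in>space M. t \<le> ennreal (U (f y))}"
  have "L \<noteq> {}"
  proof
    assume "L = {}"
    then have "pm t (m L) = 0" using mm pm by (simp add: monotone_measure_def pm_zero2)
    then show False using lt2 unfolding L_def by simp
  qed
  then obtain y where y: "y \<in> space M" "t \<le> ennreal (U (f y))" unfolding L_def by auto
  then have "t \<noteq> top" by (metis ennreal_neq_top top.extremum_unique)
  then obtain t' where t': "t = ennreal t'" "0 \<le> t'" by (cases t) auto
  have fy: "0 \<le> f y" using fnn y by auto
  have t'le: "t' \<le> U (f y)" using y(2) t' csi_nonneg[OF U fy] by (simp add: ennreal_le_iff)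
  show ?thesis
  proof (cases "t' < U 0")
    case True
    have "L = space M"
    proof (auto simp: L_def)
      fix z assume "z \<in> space M"
      then have "U 0 \<le> U (f z)" using csi_le_iff[OF U _ ] fnn by auto
      then show "t \<le> ennreal (U (f z))" using True t' by (simp add: ennreal_leI)
    qed
    then have "pm t (m L) \<le> t" using mX by simp
    also have "t \<le> ennreal (U a)"
      using True t' csi_le_iff[OF U _ a, of 0] a by (auto intro!: ennreal_leI)
    finally show ?thesis using lt2 unfolding L_def by simp
  next
    case False
    have "continuous_on {0..f y} U"
      using U unfolding cont_strict_incr_def by (auto intro: continuous_on_subset)
    then obtain a' where a': "0 \<le> a'" "a' \<le> f y" "U a' = t'"
      using IVT'[of U 0 t' "f y"] False t'le fy by auto
    have "L = {x\<in>space M. a' \<le> f x}"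
    proof (auto simp: L_def)
      fix z assume z: "z \<in> space M" "t \<le> ennreal (U (f z))"
      then have "t' \<le> U (f z)" using t' csi_nonneg[OF U, of "f z"] fnn by (simp add: ennreal_le_iff)
      then show "a' \<le> f z" using csi_le_iff[OF U a'(1), of "f z"] fnn z a' by auto
    next
      fix z assume z: "z \<in> space M" "a' \<le> f z"
      then have "U a' \<le> U (f z)" using csi_le_iff[OF U a'(1), of "f z"] fnn by auto
      then show "t \<le> ennreal (U (f z))" using t' a' by (simp add: ennreal_leI)
    qed
    then show ?thesis using lt2 a' t' unfolding L_def by metis
  qed
qed

lemma chain:
  assumes "comonotone M f g"
  shows "{x\<in>space M. a \<le> f x} \<subseteq> {x\<in>space M. b \<le> g x} \<or> {x\<in>space M. b \<le> g x} \<subseteq> {x\<in>space M. a \<le> f x}"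
proof (rule ccontr)
  assume "\<not> ?thesis"
  then obtain x y where "x \<in> space M" "a \<le> f x" "\<not> b \<le> g x" "y \<in> space M" "b \<le> g y" "\<not> a \<le> f y"
    by auto
  moreover have "(f x - f y) * (g x - g y) \<ge> 0" using assms calculation unfolding comonotone_def by auto
  ultimately show False by (smt (verit) mult_pos_neg)
qed


lemma h_meas:
  assumes f: "f \<in> borel_measurable M" and fnn: "\<forall>x\<in>space M. f x \<ge> 0"
    and g: "g \<in> borel_measurable M" and gnn: "\<forall>x\<in>space M. g x \<ge> 0"
    and U0: "cont_strict_incr U0" and psi: "cont_strict_incr \<psi>"
    and star_cont: "continuous_on ({0..} \<times> {0..}) (\<lambda>(a, b). star a b)"
    and star_nonneg: "\<forall>a b. 0 \<le> a \<longrightarrow> 0 \<le> b \<longrightarrow> 0 \<le> star a b"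
  shows "(\<lambda>x. U0 (star (\<psi> (f x)) (\<psi> (g x)))) \<in> borel_measurable M"
proof -
  have pc1: "continuous_on {0..} \<psi>" using psi by (simp add: cont_strict_incr_def)
  have pc2: "continuous_on {0..} U0" using U0 by (simp add: cont_strict_incr_def)
  note pc = pc1 pc2
  have pn: "\<And>x. 0 \<le> x \<Longrightarrow> 0 \<le> \<psi> x" using psi by (simp add: cont_strict_incr_def)
  have m1: "continuous_on UNIV (\<lambda>p::real\<times>real. max 0 (fst p))" by (intro continuous_intros)
  have m2: "continuous_on UNIV (\<lambda>p::real\<times>real. max 0 (snd p))" by (intro continuous_intros)
  have c1: "continuous_on UNIV (\<lambda>p::real\<times>real. \<psi> (max 0 (fst p)))"
    by (rule continuous_on_compose2[OF pc(1) m1]) auto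
  have c2: "continuous_on UNIV (\<lambda>p::real\<times>real. \<psi> (max 0 (snd p)))"
    by (rule continuous_on_compose2[OF pc(1) m2]) auto
  have c12: "continuous_on UNIV (\<lambda>p::real\<times>real. (\<psi> (max 0 (fst p)), \<psi> (max 0 (snd p))))"
    using c1 c2 by (rule continuous_on_Pair)
  have q1: "\<And>p. 0 \<le> \<psi> (max 0 p)" by (rule pn) simp
  have c3: "continuous_on UNIV (\<lambda>p::real\<times>real. (\<lambda>(a, b). star a b) (\<psi> (max 0 (fst p)), \<psi> (max 0 (snd p))))"
    by (rule continuous_on_compose2[OF star_cont c12]) (auto simp: q1 simp del: max.absorb1 max.absorb2)
  have c4: "continuous_on UNIV (\<lambda>p::real\<times>real. U0 ((\<lambda>(a, b). star a b) (\<psi> (max 0 (fst p)), \<psi> (max 0 (snd p)))))"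
    by (rule continuous_on_compose2[OF pc(2) c3]) (auto simp: q1 star_nonneg simp del: max.absorb1 max.absorb2)
  have "(\<lambda>x. (\<lambda>a b. U0 (star (\<psi> (max 0 a)) (\<psi> (max 0 b)))) (f x) (g x)) \<in> borel_measurable M"
    by (rule borel_measurable_continuous_Pair[OF f g]) (use c4 in simp)
  then show ?thesis
    by (rule measurable_cong[THEN iffD1, rotated]) (use fnn gnn in auto)
qed

theorem corollary3p1:
  fixes M :: "'a measure"
    and f g :: "'a \<Rightarrow> real"
    and pm :: "ennreal \<Rightarrow> ennreal \<Rightarrow> ennreal"
    and e :: ennreal
    and m :: "'a set \<Rightarrow> ennreal"
    and U0 U1 U2 \<psi> :: "real \<Rightarrow> real"
    and star :: "real \<Rightarrow> real \<Rightarrow> real"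
  assumes f_meas: "f \<in> borel_measurable M" and f_nonneg: "\<forall>x\<in>space M. f x \<ge> 0"
    and g_meas: "g \<in> borel_measurable M" and g_nonneg: "\<forall>x\<in>space M. g x \<ge> 0"
    and comono: "comonotone M f g"
    and pm: "pseudo_mult pm e"
    and mm: "monotone_measure M m"
    and mX: "\<forall>a. pm a (m (space M)) \<le> a"
    and U0: "cont_strict_incr U0" and U1: "cont_strict_incr U1" and U2: "cont_strict_incr U2"
    and fin1: "gen_sugeno M pm m (\<lambda>x. ennreal (U1 (f x))) < \<infinity>"
    and fin2: "gen_sugeno M pm m (\<lambda>x. ennreal (U2 (g x))) < \<infinity>"
    and star_cont: "continuous_on ({0..} \<times> {0..}) (\<lambda>(a, b). star a b)"
    and star_mono1: "\<forall>a a' b. 0 \<le> a \<longrightarrow> a \<le> a' \<longrightarrow> 0 \<le> b \<longrightarrow> star a b \<le> star a' b"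
    and star_mono2: "\<forall>a b b'. 0 \<le> a \<longrightarrow> 0 \<le> b \<longrightarrow> b \<le> b' \<longrightarrow> star a b \<le> star a b'"
    and star_nonneg: "\<forall>a b. 0 \<le> a \<longrightarrow> 0 \<le> b \<longrightarrow> 0 \<le> star a b"
    and psi: "cont_strict_incr \<psi>"
    and cond: "\<forall>a b c. 0 \<le> a \<longrightarrow> 0 \<le> b \<longrightarrow>
       ginv U0 (pm (ennreal (U0 (star (\<psi> a) (\<psi> b)))) c)
       \<ge> ennreal (max (star (\<psi> (enn2real (ginv U1 (pm (ennreal (U1 a)) c)))) (\<psi> b))
                       (star (\<psi> a) (\<psi> (enn2real (ginv U2 (pm (ennreal (U2 b)) c))))))"
  shows "ginv U0 (gen_sugeno M pm m (\<lambda>x. ennreal (U0 (star (\<psi> (f x)) (\<psi> (g x))))))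
       \<ge> ennreal (star (\<psi> (enn2real (ginv U1 (gen_sugeno M pm m (\<lambda>x. ennreal (U1 (f x)))))))
                       (\<psi> (enn2real (ginv U2 (gen_sugeno M pm m (\<lambda>x. ennreal (U2 (g x))))))))"
proof -
  define A where "A = gen_sugeno M pm m (\<lambda>x. ennreal (U1 (f x)))"
  define B where "B = gen_sugeno M pm m (\<lambda>x. ennreal (U2 (g x)))"
  define h where "h = (\<lambda>x. U0 (star (\<psi> (f x)) (\<psi> (g x))))"
  define G where "G = ginv U0 (gen_sugeno M pm m (\<lambda>x. ennreal (h x)))"
  define as where "as = enn2real (ginv U1 A)"
  define bs where "bs = enn2real (ginv U2 B)"
  define \<phi> where "\<phi> = (\<lambda>a b. star (\<psi> a) (\<psi> b))"
  have hm[measurable]: "h \<in> borel_measurable M"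
    unfolding h_def by (rule h_meas[OF f_meas f_nonneg g_meas g_nonneg U0 psi star_cont star_nonneg])
  note [measurable] = f_meas g_meas
  have pn: "\<And>x. 0 \<le> x \<Longrightarrow> 0 \<le> \<psi> x" using csi_nonneg[OF psi] .
  have psi_mono: "\<And>x y. 0 \<le> x \<Longrightarrow> x \<le> y \<Longrightarrow> \<psi> x \<le> \<psi> y"
    using csi_le_iff[OF psi] by auto
  have phi_mono: "\<phi> a b \<le> \<phi> a' b'" if "0 \<le> a" "0 \<le> b" "a \<le> a'" "b \<le> b'" for a b a' b'
  proof -
    have "star (\<psi> a) (\<psi> b) \<le> star (\<psi> a') (\<psi> b)"
      by (rule star_mono1[rule_format]) (use pn psi_mono that in simp_all)
    also have "\<dots> \<le> star (\<psi> a') (\<psi> b')"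
      by (rule star_mono2[rule_format]) (use pn[OF order_trans[OF that(1) that(3)]] pn[OF that(2)] psi_mono[OF that(2) that(4)] in simp_all)
    finally show ?thesis unfolding \<phi>_def .
  qed
  have phi_nn: "0 \<le> \<phi> a b" if "0 \<le> a" "0 \<le> b" for a b
    unfolding \<phi>_def by (rule star_nonneg[rule_format]) (use pn that in simp_all)
  have Em: "\<And>a. {x\<in>space M. a \<le> f x} \<in> sets M" by measurable
  have Fm: "\<And>b. {x\<in>space M. b \<le> g x} \<in> sets M" by measurable
  have core: "ennreal (\<phi> a b) \<le> G"
    if a: "0 \<le> a" and b: "0 \<le> b" and ha: "a < as \<or> a = 0" and hb: "b < bs \<or> b = 0" for a b
  proof -
    obtain a' where a': "0 \<le> a'" "a = 0 \<or> ennreal (U1 a) \<le> pm (ennreal (U1 a')) (m {x\<in>space M. a' \<le> f x})"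
    proof (cases "a < as")
      case True
      then show ?thesis using approx[OF U1 f_nonneg pm mm mX a] that unfolding as_def A_def
        by (meson less_imp_le)
    next
      case False then show ?thesis using ha that[of 0] by auto
    qed
    obtain b' where b': "0 \<le> b'" "b = 0 \<or> ennreal (U2 b) \<le> pm (ennreal (U2 b')) (m {x\<in>space M. b' \<le> g x})"
    proof (cases "b < bs")
      case True
      then show ?thesis using approx[OF U2 g_nonneg pm mm mX b] that unfolding bs_def B_def
        by (meson less_imp_le)
    next
      case False then show ?thesis using hb that[of 0] by auto
    qed
    define E where "E = {x\<in>space M. a' \<le> f x}"
    define F where "F = {x\<in>space M. b' \<le> g x}"
    have Es: "E \<in> sets M" "F \<in> sets M" unfolding E_def F_def using Em Fm by auto
    have ba: "a \<le> enn2real (ginv U1 (pm (ennreal (U1 a')) (m E)))" "a \<le> a'"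
      using bound[OF U1 pm mm mX Es(1) a'(1) a] a'(2) unfolding E_def by auto
    have bb: "b \<le> enn2real (ginv U2 (pm (ennreal (U2 b')) (m F)))" "b \<le> b'"
      using bound[OF U2 pm mm mX Es(2) b'(1) b] b'(2) unfolding F_def by auto
    define T where "T = ennreal (U0 (star (\<psi> a') (\<psi> b')))"
    have lev: "pm T (m S) \<le> gen_sugeno M pm m (\<lambda>x. ennreal (h x))"
      if S: "S \<in> sets M" "S \<subseteq> E \<inter> F" for S
    proof (cases "T = 0")
      case True then show ?thesis using pm_zero1[OF pm] by simp
    next
      case False
      have sub: "S \<subseteq> {x\<in>space M. T \<le> ennreal (h x)}"
      proof
        fix x assume x: "x \<in> S"
        then have xs: "x \<in> space M" "a' \<le> f x" "b' \<le> g x" using S unfolding E_def F_def by auto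
        have "\<phi> a' b' \<le> \<phi> (f x) (g x)" using phi_mono[OF a'(1) b'(1) xs(2,3)] .
        then have "U0 (\<phi> a' b') \<le> U0 (\<phi> (f x) (g x))"
          using csi_le_iff[OF U0 phi_nn[OF a'(1) b'(1)] phi_nn[of "f x" "g x"]] f_nonneg g_nonneg xs by auto
        then show "x \<in> {x\<in>space M. T \<le> ennreal (h x)}"
          using xs unfolding T_def h_def \<phi>_def by (auto intro: ennreal_leI)
      qed
      have Lm: "{x\<in>space M. T \<le> ennreal (h x)} \<in> sets M" by measurable
      have "pm T (m S) \<le> pm T (m {x\<in>space M. T \<le> ennreal (h x)})"
        by (rule pm_mono2[OF pm mm_mono[OF mm S(1) Lm sub]])
      also have "\<dots> \<le> gen_sugeno M pm m (\<lambda>x. ennreal (h x))"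
        unfolding gen_sugeno_def by (rule SUP_upper) (use False in \<open>auto simp: zero_less_iff_neq_zero\<close>)
      finally show ?thesis .
    qed
    have mx: "ginv U0 (pm T c) \<ge> ennreal (max (star (\<psi> (enn2real (ginv U1 (pm (ennreal (U1 a')) c)))) (\<psi> b'))
                       (star (\<psi> a') (\<psi> (enn2real (ginv U2 (pm (ennreal (U2 b')) c))))))" for c
      using cond[rule_format, OF a'(1) b'(1), of c] unfolding T_def .
    show ?thesis
    proof (cases "E \<subseteq> F")
      case True
      have "ennreal (\<phi> a b) \<le> ennreal (\<phi> (enn2real (ginv U1 (pm (ennreal (U1 a')) (m E)))) b')"
        by (rule ennreal_leI, rule phi_mono) (use a b ba bb in auto)
      also have "\<dots> \<le> ginv U0 (pm T (m E))"
        using mx[of "m E"] unfolding \<phi>_def by (meson ennreal_leI max.cobounded1 order_trans)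
      also have "\<dots> \<le> G" unfolding G_def by (rule ginv_mono, rule lev) (use True Es in auto)
      finally show ?thesis .
    next
      case False
      then have FE: "F \<subseteq> E" using chain[OF comono, of a' b'] unfolding E_def F_def by auto
      have "ennreal (\<phi> a b) \<le> ennreal (\<phi> a' (enn2real (ginv U2 (pm (ennreal (U2 b')) (m F)))))"
        by (rule ennreal_leI, rule phi_mono) (use a b ba bb in auto)
      also have "\<dots> \<le> ginv U0 (pm T (m F))"
        using mx[of "m F"] unfolding \<phi>_def by (meson ennreal_leI max.cobounded2 order_trans)
      also have "\<dots> \<le> G" unfolding G_def by (rule ginv_mono, rule lev) (use FE Es in auto)
      finally show ?thesis .
    qed
  qed
  have asn: "0 \<le> as" "0 \<le> bs" unfolding as_def bs_def by auto
  define an where "an = (\<lambda>n. as * (real n / real (Suc n)))"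
  define bn where "bn = (\<lambda>n. bs * (real n / real (Suc n)))"
  have q: "0 \<le> real n / real (Suc n)" "real n / real (Suc n) < 1" for n by auto
  have an: "0 \<le> an n" "an n < as \<or> an n = 0" for n
  proof -
    show "0 \<le> an n" unfolding an_def using asn q[of n] by simp
    show "an n < as \<or> an n = 0"
    proof (cases "as = 0")
      case True then show ?thesis unfolding an_def by simp
    next
      case False
      then have "as * (real n / real (Suc n)) < as * 1"
        using asn by (intro mult_strict_left_mono) (simp_all add: q)
      then show ?thesis unfolding an_def by simp
    qed
  qed
  have bn: "0 \<le> bn n" "bn n < bs \<or> bn n = 0" for n
  proof -
    show "0 \<le> bn n" unfolding bn_def using asn q[of n] by simp
    show "bn n < bs \<or> bn n = 0"
    proof (cases "bs = 0")
      case True then show ?thesis unfolding bn_def by simp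
    next
      case False
      then have "bs * (real n / real (Suc n)) < bs * 1"
        using asn by (intro mult_strict_left_mono) (simp_all add: q)
      then show ?thesis unfolding bn_def by simp
    qed
  qed
  have la: "an \<longlonglongrightarrow> as" unfolding an_def
    using tendsto_mult[OF tendsto_const LIMSEQ_n_over_Suc_n, of as] by simp
  have lb: "bn \<longlonglongrightarrow> bs" unfolding bn_def
    using tendsto_mult[OF tendsto_const LIMSEQ_n_over_Suc_n, of bs] by simp
  have pc: "continuous_on {0..} \<psi>" using psi by (simp add: cont_strict_incr_def)
  have lpa: "(\<lambda>n. \<psi> (an n)) \<longlonglongrightarrow> \<psi> as"
    by (rule continuous_on_tendsto_compose[OF pc la]) (simp_all add: asn an(1))
  have lpb: "(\<lambda>n. \<psi> (bn n)) \<longlonglongrightarrow> \<psi> bs"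
    by (rule continuous_on_tendsto_compose[OF pc lb]) (simp_all add: asn bn(1))
  have lphi: "(\<lambda>n. (\<lambda>(x, y). star x y) (\<psi> (an n), \<psi> (bn n))) \<longlonglongrightarrow> (\<lambda>(x, y). star x y) (\<psi> as, \<psi> bs)"
    by (rule continuous_on_tendsto_compose[OF star_cont tendsto_Pair[OF lpa lpb]]) (simp_all add: asn an(1) bn(1) pn)
  have "(\<lambda>n. ennreal (\<phi> (an n) (bn n))) \<longlonglongrightarrow> ennreal (\<phi> as bs)"
    using lphi unfolding \<phi>_def by (auto intro: tendsto_ennrealI)
  then have "ennreal (\<phi> as bs) \<le> G"
    by (rule LIMSEQ_le_const2) (use core[OF an(1) bn(1) an(2) bn(2)] in blast)
  then show ?thesis unfolding \<phi>_def as_def bs_def G_def h_def A_def B_def .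
qed

end
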